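(* There exists an infinite family of digraphs $\{X_j\}_{j=1}^{\infty}$ such that the diameter of $\Gamma(X_j)$ tends to $\infty$ as $j\to\infty$, while each $H(X_j)$ has exactly three distinct eigenvalues.
   Context: A digraph $X$ has a finite vertex set and an arc set of ordered pairs of distinct vertices. The underlying graph $\Gamma(X)$ is the simple graph with an edge $\{x,y\}$ whenever $xy$ or $yx$ is an arc. The Hermitian adjacency matrix $H(X)$ has $(u,v)$-entry $1$ if $uv$ and $vu$ are arcs, $i$ if only $uv$ is an arc, $-i$ if only $vu$ is an arc, and $0$ otherwise. *)

theory Defs
  imports Complex_Main "Jordan_Normal_Form.Char_Poly"
begin

definition is_digraph :: "nat \<Rightarrow> (nat \<times> nat) set \<Rightarrow> bool" where
  "is_digraph n A \<longleftrightarrow> A \<subseteq> {0..<n} \<times> {0..<n} \<and> (\<forall>x. (x, x) \<notin> A)"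

definition underlying_edges :: "(nat \<times> nat) set \<Rightarrow> (nat \<times> nat) set" where
  "underlying_edges A = {(x, y). (x, y) \<in> A \<or> (y, x) \<in> A}"

definition und_connected :: "nat \<Rightarrow> (nat \<times> nat) set \<Rightarrow> bool" where
  "und_connected n A \<longleftrightarrow> (\<forall>x<n. \<forall>y<n. \<exists>k. (x, y) \<in> underlying_edges A ^^ k)"

definition und_dist :: "(nat \<times> nat) set \<Rightarrow> nat \<Rightarrow> nat \<Rightarrow> nat" where
  "und_dist A x y = (LEAST k. (x, y) \<in> underlying_edges A ^^ k)"

definition und_diameter :: "nat \<Rightarrow> (nat \<times> nat) set \<Rightarrow> nat" where
  "und_diameter n A = Max {und_dist A x y | x y. x < n \<and> y < n}"

definition hermitian_adj :: "nat \<Rightarrow> (nat \<times> nat) set \<Rightarrow> complex mat" where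
  "hermitian_adj n A = mat n n (\<lambda>(u, v).
     if (u, v) \<in> A \<and> (v, u) \<in> A then 1
     else if (u, v) \<in> A then \<i>
     else if (v, u) \<in> A then - \<i>
     else 0)"

end

theory Submission
  imports Defs
begin

lemma sm1: "(a::complex) \<cdot>\<^sub>m 1\<^sub>m N * (b \<cdot>\<^sub>m 1\<^sub>m N) = (a * b) \<cdot>\<^sub>m 1\<^sub>m N"
  by (rule eq_matI) (auto simp: mult_smult_distrib mult_smult_assoc_mat)
lemma sm2: "P \<in> carrier_mat N N \<Longrightarrow> P * ((a::complex) \<cdot>\<^sub>m 1\<^sub>m N) = a \<cdot>\<^sub>m P"
  by (subst mult_smult_distrib[of _ N N _ N]) auto
lemma sm3: "P \<in> carrier_mat N N \<Longrightarrow> ((a::complex) \<cdot>\<^sub>m 1\<^sub>m N) * P = a \<cdot>\<^sub>m P"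
  by (subst mult_smult_assoc_mat[of _ N N _ N]) auto
lemma fb_smult_one: "four_block_mat ((c::complex) \<cdot>\<^sub>m 1\<^sub>m N) (0\<^sub>m N N) (0\<^sub>m N N) (c \<cdot>\<^sub>m 1\<^sub>m N) = c \<cdot>\<^sub>m 1\<^sub>m (N + N)"
  by (rule eq_matI) auto

definition stepP :: "nat \<Rightarrow> complex mat \<Rightarrow> complex mat" where
  "stepP N P = four_block_mat P (\<i> \<cdot>\<^sub>m 1\<^sub>m N) ((- \<i>) \<cdot>\<^sub>m 1\<^sub>m N) (- P)"
definition stepQ :: "nat \<Rightarrow> complex mat \<Rightarrow> complex mat" where
  "stepQ N Q = four_block_mat Q (0\<^sub>m N N) (0\<^sub>m N N) Q"

lemma step_alg:
  assumes P: "P \<in> carrier_mat N N" and Q: "Q \<in> carrier_mat N N"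
    and PP: "P * P = p \<cdot>\<^sub>m 1\<^sub>m N" and QQ: "Q * Q = q \<cdot>\<^sub>m 1\<^sub>m N" and PQ: "P * Q = Q * P"
  shows "stepP N P * stepP N P = (p + 1) \<cdot>\<^sub>m 1\<^sub>m (N + N)"
    "stepQ N Q * stepQ N Q = q \<cdot>\<^sub>m 1\<^sub>m (N + N)"
    "stepP N P * stepQ N Q = four_block_mat (P * Q) (\<i> \<cdot>\<^sub>m Q) ((- \<i>) \<cdot>\<^sub>m Q) (- (P * Q))"
    "stepQ N Q * stepP N P = four_block_mat (P * Q) (\<i> \<cdot>\<^sub>m Q) ((- \<i>) \<cdot>\<^sub>m Q) (- (P * Q))"
proof -
  have PQc: "P * Q \<in> carrier_mat N N" using P Q by auto
  have "stepP N P * stepP N P = four_block_mat (P * P + (\<i> \<cdot>\<^sub>m 1\<^sub>m N) * ((- \<i>) \<cdot>\<^sub>m 1\<^sub>m N))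
     (P * (\<i> \<cdot>\<^sub>m 1\<^sub>m N) + (\<i> \<cdot>\<^sub>m 1\<^sub>m N) * (- P))
     (((- \<i>) \<cdot>\<^sub>m 1\<^sub>m N) * P + (- P) * ((- \<i>) \<cdot>\<^sub>m 1\<^sub>m N))
     (((- \<i>) \<cdot>\<^sub>m 1\<^sub>m N) * (\<i> \<cdot>\<^sub>m 1\<^sub>m N) + (- P) * (- P))"
    unfolding stepP_def
    by (rule mult_four_block_mat) (use P in auto)
  also have "\<dots> = four_block_mat ((p + 1) \<cdot>\<^sub>m 1\<^sub>m N) (0\<^sub>m N N) (0\<^sub>m N N) ((p + 1) \<cdot>\<^sub>m 1\<^sub>m N)"
    apply (rule cong_four_block_mat)
    using P PP by (auto simp: sm1 sm2 sm3 intro!: eq_matI)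
  finally show "stepP N P * stepP N P = (p + 1) \<cdot>\<^sub>m 1\<^sub>m (N + N)" by (simp add: fb_smult_one)
  have "stepQ N Q * stepQ N Q = four_block_mat (Q * Q + 0\<^sub>m N N * 0\<^sub>m N N) (Q * 0\<^sub>m N N + 0\<^sub>m N N * Q)
        (0\<^sub>m N N * Q + Q * 0\<^sub>m N N) (0\<^sub>m N N * 0\<^sub>m N N + Q * Q)"
    unfolding stepQ_def
    by (rule mult_four_block_mat) (use Q in auto)
  also have "\<dots> = four_block_mat (q \<cdot>\<^sub>m 1\<^sub>m N) (0\<^sub>m N N) (0\<^sub>m N N) (q \<cdot>\<^sub>m 1\<^sub>m N)"
    apply (rule cong_four_block_mat)
    using Q QQ by (auto intro!: eq_matI)
  finally show "stepQ N Q * stepQ N Q = q \<cdot>\<^sub>m 1\<^sub>m (N + N)" by (simp add: fb_smult_one)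
  have "stepP N P * stepQ N Q = four_block_mat (P * Q + (\<i> \<cdot>\<^sub>m 1\<^sub>m N) * 0\<^sub>m N N)
     (P * 0\<^sub>m N N + (\<i> \<cdot>\<^sub>m 1\<^sub>m N) * Q)
     (((- \<i>) \<cdot>\<^sub>m 1\<^sub>m N) * Q + (- P) * 0\<^sub>m N N)
     (((- \<i>) \<cdot>\<^sub>m 1\<^sub>m N) * 0\<^sub>m N N + (- P) * Q)"
    unfolding stepP_def stepQ_def
    by (rule mult_four_block_mat) (use P Q in auto)
  also have "\<dots> = four_block_mat (P * Q) (\<i> \<cdot>\<^sub>m Q) ((- \<i>) \<cdot>\<^sub>m Q) (- (P * Q))"
    apply (rule cong_four_block_mat)
    using P Q PQc by (auto simp: sm1 sm2 sm3 intro!: eq_matI)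
  finally show "stepP N P * stepQ N Q = four_block_mat (P * Q) (\<i> \<cdot>\<^sub>m Q) ((- \<i>) \<cdot>\<^sub>m Q) (- (P * Q))" .
  have "stepQ N Q * stepP N P = four_block_mat (Q * P + 0\<^sub>m N N * ((- \<i>) \<cdot>\<^sub>m 1\<^sub>m N))
     (Q * (\<i> \<cdot>\<^sub>m 1\<^sub>m N) + 0\<^sub>m N N * (- P))
     (0\<^sub>m N N * P + Q * ((- \<i>) \<cdot>\<^sub>m 1\<^sub>m N))
     (0\<^sub>m N N * (\<i> \<cdot>\<^sub>m 1\<^sub>m N) + Q * (- P))"
    unfolding stepP_def stepQ_def
    by (rule mult_four_block_mat) (use P Q in auto)
  also have "\<dots> = four_block_mat (P * Q) (\<i> \<cdot>\<^sub>m Q) ((- \<i>) \<cdot>\<^sub>m Q) (- (P * Q))"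
    apply (rule cong_four_block_mat)
    using P Q PQc PQ by (auto simp: sm1 sm2 sm3 intro!: eq_matI)
  finally show "stepQ N Q * stepP N P = four_block_mat (P * Q) (\<i> \<cdot>\<^sub>m Q) ((- \<i>) \<cdot>\<^sub>m Q) (- (P * Q))" .
qed

fun AB :: "nat \<Rightarrow> complex mat \<times> complex mat" where
  "AB 0 = (0\<^sub>m 1 1, 0\<^sub>m 1 1)"
| "AB (Suc n) = (if even n then (stepP (2^n) (fst (AB n)), stepQ (2^n) (snd (AB n)))
                 else (stepQ (2^n) (fst (AB n)), stepP (2^n) (snd (AB n))))"

lemma fb_diag0:
  assumes "X \<in> carrier_mat N N" "D \<in> carrier_mat N N" "\<forall>u<N. X $$ (u,u) = 0" "\<forall>u<N. D $$ (u,u) = 0"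
  shows "\<forall>u<N+N. four_block_mat X Y Z D $$ (u,u) = 0"
  using assms by auto

lemma AB_alg: "fst (AB n) \<in> carrier_mat (2^n) (2^n) \<and> snd (AB n) \<in> carrier_mat (2^n) (2^n)
  \<and> fst (AB n) * fst (AB n) = of_nat ((n+1) div 2) \<cdot>\<^sub>m 1\<^sub>m (2^n)
  \<and> snd (AB n) * snd (AB n) = of_nat (n div 2) \<cdot>\<^sub>m 1\<^sub>m (2^n)
  \<and> fst (AB n) * snd (AB n) = snd (AB n) * fst (AB n)
  \<and> (\<forall>u<2^n. (fst (AB n) * snd (AB n)) $$ (u,u) = 0)"
proof (induction n)
  case 0
  then show ?case by (auto intro!: eq_matI)
next
  case (Suc n)
  define A where "A = fst (AB n)"
  define B where "B = snd (AB n)"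
  define N where "N = (2::nat)^n"
  have N2: "(2::nat)^Suc n = N + N" by (simp add: N_def)
  have A: "A \<in> carrier_mat N N" and B: "B \<in> carrier_mat N N"
    and AA: "A * A = of_nat ((n+1) div 2) \<cdot>\<^sub>m 1\<^sub>m N"
    and BB: "B * B = of_nat (n div 2) \<cdot>\<^sub>m 1\<^sub>m N"
    and AB': "A * B = B * A" and dg: "\<forall>u<N. (A * B) $$ (u,u) = 0"
    using Suc.IH by (auto simp: A_def B_def N_def)
  have ABc: "A * B \<in> carrier_mat N N" using A B by auto
  have dg2: "\<forall>u<N. (- (A * B)) $$ (u,u) = 0" proof (intro allI impI)
    fix u assume u: "u < N"
    have "(- (A * B)) $$ (u,u) = - ((A * B) $$ (u,u))"
      using u ABc by (intro index_uminus_mat) auto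
    then show "(- (A * B)) $$ (u,u) = 0" using dg u by simp
  qed
  have nABc: "- (A * B) \<in> carrier_mat N N" using ABc by auto
  note fd = fb_diag0[OF ABc nABc dg dg2]
  show ?case
  proof (cases "even n")
    case True
    note s = step_alg[OF A B AA BB AB']
    have e1: "of_nat ((n + 1) div 2) + 1 = (of_nat ((Suc n + 1) div 2) :: complex)"
      "n div 2 = Suc n div 2" using True by auto
    have f: "fst (AB (Suc n)) = stepP N A" "snd (AB (Suc n)) = stepQ N B"
      using True by (auto simp: A_def B_def N_def)
    show ?thesis unfolding f N2
      using s(1,2,3,4) e1 fd ABc dg
      by (auto simp: stepP_def stepQ_def A B)
  next
    case False
    note s = step_alg[OF B A BB AA AB'[symmetric]]
    have e1: "of_nat (n div 2) + 1 = (of_nat (Suc n div 2) :: complex)"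
      "(n + 1) div 2 = (Suc n + 1) div 2" using False by auto
    have f: "fst (AB (Suc n)) = stepQ N A" "snd (AB (Suc n)) = stepP N B"
      using False by (auto simp: A_def B_def N_def)
    show ?thesis unfolding f N2
      using s(1,2,3,4) e1 fd ABc dg AB'
      by (auto simp: stepP_def stepQ_def A B)
  qed
qed

fun pc :: "nat \<Rightarrow> nat" where
  "pc x = (if x = 0 then 0 else x mod 2 + pc (x div 2))"

lemma pc_eq: "pc x = x mod 2 + pc (x div 2)"
  by (cases "x = 0") simp_all

declare pc.simps[simp del]

lemma pc_add: "u < 2^n \<Longrightarrow> pc (u + 2^n) = Suc (pc u)"
proof (induction n arbitrary: u)
  case 0
  then show ?case by (simp add: pc_eq[of 1] pc.simps)
next
  case (Suc n)
  have "(u + 2^Suc n) mod 2 = u mod 2" by simp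
  moreover have "(u + 2^Suc n) div 2 = u div 2 + 2^n" by simp
  moreover have "u div 2 < 2^n" using Suc.prems by auto
  ultimately show ?case using Suc.IH[of "u div 2"] pc_eq[of u] pc_eq[of "u + 2^Suc n"] by (simp add: add.commute)
qed

lemma pc_top: "pc (2^n - 1) = n"
proof (induction n)
  case 0
  then show ?case by (simp add: pc.simps)
next
  case (Suc n)
  have "(2::nat)^Suc n - 1 = (2^n - 1) + 2^n" by simp
  moreover have "(2::nat)^n - 1 < 2^n" by simp
  ultimately show ?case using pc_add Suc.IH by metis
qed

definition good :: "nat \<Rightarrow> complex mat \<Rightarrow> bool" where
  "good N M \<longleftrightarrow> (\<forall>u<N. \<forall>v<N. (M $$ (u,v) = 0 \<or> M $$ (u,v) = \<i> \<or> M $$ (u,v) = - \<i>)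
     \<and> M $$ (v,u) = cnj (M $$ (u,v))
     \<and> (M $$ (u,v) \<noteq> 0 \<longrightarrow> pc u = Suc (pc v) \<or> pc v = Suc (pc u)))"

definition disj :: "nat \<Rightarrow> complex mat \<Rightarrow> complex mat \<Rightarrow> bool" where
  "disj N P Q \<longleftrightarrow> (\<forall>u<N. \<forall>v<N. P $$ (u,v) = 0 \<or> Q $$ (u,v) = 0)"

lemma good_stepP:
  assumes P: "P \<in> carrier_mat N N" and N: "N = 2^n" and g: "good N P"
  shows "good (N + N) (stepP N P)"
  unfolding good_def
proof (intro allI impI)
  fix u v assume u: "u < N + N" and v: "v < N + N"
  let ?M = "stepP N P"
  have idx: "?M $$ (x,y) = (if x < N then if y < N then P $$ (x,y) else (if x = y - N then \<i> else 0)
     else if y < N then (if x - N = y then - \<i> else 0) else - P $$ (x - N, y - N))"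
    if "x < N + N" "y < N + N" for x y
    using that P unfolding stepP_def by (simp add: index_mat_four_block)
  have pcs: "pc x = Suc (pc (x - N))" if "N \<le> x" "x < N + N" for x
    using pc_add[of "x - N" n] that N by simp
  show "(?M $$ (u,v) = 0 \<or> ?M $$ (u,v) = \<i> \<or> ?M $$ (u,v) = - \<i>)
     \<and> ?M $$ (v,u) = cnj (?M $$ (u,v))
     \<and> (?M $$ (u,v) \<noteq> 0 \<longrightarrow> pc u = Suc (pc v) \<or> pc v = Suc (pc u))"
  proof (cases "u < N")
    case uT: True
    show ?thesis
    proof (cases "v < N")
      case True
      have e: "?M $$ (u,v) = P $$ (u,v)" "?M $$ (v,u) = P $$ (v,u)"
        using idx[OF u v] idx[OF v u] uT True by auto
      have gg: "(P $$ (u,v) = 0 \<or> P $$ (u,v) = \<i> \<or> P $$ (u,v) = - \<i>)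
         \<and> P $$ (v,u) = cnj (P $$ (u,v))
         \<and> (P $$ (u,v) \<noteq> 0 \<longrightarrow> pc u = Suc (pc v) \<or> pc v = Suc (pc u))"
        using g uT True unfolding good_def by blast
      show ?thesis unfolding e using gg by simp
    next
      case False
      have e: "?M $$ (u,v) = (if u = v - N then \<i> else 0)" "?M $$ (v,u) = (if v - N = u then - \<i> else 0)"
        using idx[OF u v] idx[OF v u] uT False by auto
      show ?thesis unfolding e using pcs[of v] False v by (cases "u = v - N") auto
    qed
  next
    case uF: False
    show ?thesis
    proof (cases "v < N")
      case True
      have e: "?M $$ (u,v) = (if u - N = v then - \<i> else 0)" "?M $$ (v,u) = (if v = u - N then \<i> else 0)"
        using idx[OF u v] idx[OF v u] uF True by auto
      show ?thesis unfolding e using pcs[of u] uF u by (cases "v = u - N") auto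
    next
      case False
      have e: "?M $$ (u,v) = - P $$ (u-N,v-N)" "?M $$ (v,u) = - P $$ (v-N,u-N)"
        using idx[OF u v] idx[OF v u] uF False by auto
      have gg: "(P $$ (u-N,v-N) = 0 \<or> P $$ (u-N,v-N) = \<i> \<or> P $$ (u-N,v-N) = - \<i>)
         \<and> P $$ (v-N,u-N) = cnj (P $$ (u-N,v-N))
         \<and> (P $$ (u-N,v-N) \<noteq> 0 \<longrightarrow> pc (u-N) = Suc (pc (v-N)) \<or> pc (v-N) = Suc (pc (u-N)))"
        using g u v uF False unfolding good_def by (meson add_less_imp_less_left less_diff_conv2 not_less)
      show ?thesis unfolding e using gg pcs[of u] pcs[of v] uF False u v by auto
    qed
  qed
qed


lemma good_stepQ:
  assumes P: "P \<in> carrier_mat N N" and N: "N = 2^n" and g: "good N P"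
  shows "good (N + N) (stepQ N P)"
  unfolding good_def
proof (intro allI impI)
  fix u v assume u: "u < N + N" and v: "v < N + N"
  let ?M = "stepQ N P"
  have idx: "?M $$ (x,y) = (if x < N then if y < N then P $$ (x,y) else 0
     else if y < N then 0 else P $$ (x - N, y - N))"
    if "x < N + N" "y < N + N" for x y
    using that P unfolding stepQ_def by (simp add: index_mat_four_block)
  have pcs: "pc x = Suc (pc (x - N))" if "N \<le> x" "x < N + N" for x
    using pc_add[of "x - N" n] that N by simp
  show "(?M $$ (u,v) = 0 \<or> ?M $$ (u,v) = \<i> \<or> ?M $$ (u,v) = - \<i>)
     \<and> ?M $$ (v,u) = cnj (?M $$ (u,v))
     \<and> (?M $$ (u,v) \<noteq> 0 \<longrightarrow> pc u = Suc (pc v) \<or> pc v = Suc (pc u))"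
  proof (cases "u < N \<and> v < N")
    case TT: True
    have e: "?M $$ (u,v) = P $$ (u,v)" "?M $$ (v,u) = P $$ (v,u)"
      using idx[OF u v] idx[OF v u] TT by auto
    have gg: "(P $$ (u,v) = 0 \<or> P $$ (u,v) = \<i> \<or> P $$ (u,v) = - \<i>)
       \<and> P $$ (v,u) = cnj (P $$ (u,v))
       \<and> (P $$ (u,v) \<noteq> 0 \<longrightarrow> pc u = Suc (pc v) \<or> pc v = Suc (pc u))"
      using g TT unfolding good_def by blast
    show ?thesis unfolding e using gg by simp
  next
    case F: False
    show ?thesis
    proof (cases "\<not> u < N \<and> \<not> v < N")
      case False
      have e: "?M $$ (u,v) = 0" "?M $$ (v,u) = 0"
        using idx[OF u v] idx[OF v u] F False by auto
      show ?thesis unfolding e by simp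
    next
      case True
      have e: "?M $$ (u,v) = P $$ (u-N,v-N)" "?M $$ (v,u) = P $$ (v-N,u-N)"
        using idx[OF u v] idx[OF v u] True by auto
      have gg: "(P $$ (u-N,v-N) = 0 \<or> P $$ (u-N,v-N) = \<i> \<or> P $$ (u-N,v-N) = - \<i>)
         \<and> P $$ (v-N,u-N) = cnj (P $$ (u-N,v-N))
         \<and> (P $$ (u-N,v-N) \<noteq> 0 \<longrightarrow> pc (u-N) = Suc (pc (v-N)) \<or> pc (v-N) = Suc (pc (u-N)))"
        using g u v True unfolding good_def by (meson add_less_imp_less_left less_diff_conv2 not_less)
      show ?thesis unfolding e using gg pcs[of u] pcs[of v] True u v by auto
    qed
  qed
qed

lemma disj_step:
  assumes P: "P \<in> carrier_mat N N" and Q: "Q \<in> carrier_mat N N" and d: "disj N P Q"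
  shows "disj (N + N) (stepP N P) (stepQ N Q)"
  unfolding disj_def
proof (intro allI impI)
  fix u v assume u: "u < N + N" and v: "v < N + N"
  have i1: "stepQ N Q $$ (x,y) = (if x < N then if y < N then Q $$ (x,y) else 0
     else if y < N then 0 else Q $$ (x - N, y - N))"
    if "x < N + N" "y < N + N" for x y
    using that Q unfolding stepQ_def by (simp add: index_mat_four_block)
  have i2: "stepP N P $$ (x,y) = (if x < N then if y < N then P $$ (x,y) else (if x = y - N then \<i> else 0)
     else if y < N then (if x - N = y then - \<i> else 0) else - P $$ (x - N, y - N))"
    if "x < N + N" "y < N + N" for x y
    using that P unfolding stepP_def by (simp add: index_mat_four_block)
  show "stepP N P $$ (u, v) = 0 \<or> stepQ N Q $$ (u, v) = 0"
  proof (cases "u < N \<and> v < N")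
    case True
    have "P $$ (u,v) = 0 \<or> Q $$ (u,v) = 0" using d True unfolding disj_def by blast
    then show ?thesis using True i1[OF u v] i2[OF u v] by auto
  next
    case F: False
    show ?thesis
    proof (cases "\<not> u < N \<and> \<not> v < N")
      case False
      then show ?thesis using F i1[OF u v] by auto
    next
      case True
      have "P $$ (u-N,v-N) = 0 \<or> Q $$ (u-N,v-N) = 0" using d True u v unfolding disj_def
        by (meson add_less_imp_less_left less_diff_conv2 not_less)
      then show ?thesis using True i1[OF u v] i2[OF u v] by auto
    qed
  qed
qed

lemma disj_sym: "disj N P Q \<Longrightarrow> disj N Q P"
  unfolding disj_def by blast

definition E :: "nat \<Rightarrow> complex mat \<Rightarrow> (nat \<times> nat) set" where
  "E N M = {(x,y). x < N \<and> y < N \<and> M $$ (x,y) \<noteq> 0}"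

definition conn :: "nat \<Rightarrow> complex mat \<Rightarrow> bool" where
  "conn N M \<longleftrightarrow> (\<forall>u<N. (0,u) \<in> (E N M)\<^sup>*)"

lemma conn_step:
  assumes c: "conn N H" and t: "\<forall>u<N. \<forall>v<N. H' $$ (u,v) = H $$ (u,v)"
    and x: "\<forall>u<N. H' $$ (u,u+N) \<noteq> 0"
  shows "conn (N+N) H'"
  unfolding conn_def
proof (intro allI impI)
  fix u assume u: "u < N + N"
  have sub: "E N H \<subseteq> E (N+N) H'" using t unfolding E_def by auto
  have r: "(0,w) \<in> (E (N+N) H')\<^sup>*" if "w < N" for w
    using c that rtrancl_mono[OF sub] unfolding conn_def by blast
  show "(0,u) \<in> (E (N+N) H')\<^sup>*"
  proof (cases "u < N")
    case True then show ?thesis using r by blast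
  next
    case False
    have u1: "u - N < N" "u - N + N = u" using False u by auto
    have "H' $$ (u - N, u) \<noteq> 0" using x u1 by metis
    then have "(u - N, u) \<in> E (N+N) H'" using u u1 unfolding E_def by auto
    with r[OF u1(1)] show ?thesis by (rule rtrancl.rtrancl_into_rtrancl)
  qed
qed

lemma AB_inv: "good (2^n) (fst (AB n)) \<and> good (2^n) (snd (AB n)) \<and> disj (2^n) (fst (AB n)) (snd (AB n))
   \<and> conn (2^n) (fst (AB n) + snd (AB n))"
proof (induction n)
  case 0
  have "good 1 (0\<^sub>m 1 1)" unfolding good_def by simp
  moreover have "disj 1 (0\<^sub>m 1 1) (0\<^sub>m 1 1)" unfolding disj_def by simp
  moreover have "conn 1 (0\<^sub>m 1 1 + 0\<^sub>m 1 1)" unfolding conn_def by simp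
  ultimately show ?case by simp
next
  case (Suc n)
  define A where "A = fst (AB n)"
  define B where "B = snd (AB n)"
  define N where "N = (2::nat)^n"
  have N2: "(2::nat)^Suc n = N + N" by (simp add: N_def)
  have A: "A \<in> carrier_mat N N" and B: "B \<in> carrier_mat N N"
    using AB_alg[of n] by (auto simp: A_def B_def N_def)
  have gA: "good N A" and gB: "good N B" and d: "disj N A B" and c: "conn N (A + B)"
    using Suc.IH by (auto simp: A_def B_def N_def)
  have iP: "stepP N P $$ (x,y) = (if x < N then if y < N then P $$ (x,y) else (if x = y - N then \<i> else 0)
     else if y < N then (if x - N = y then - \<i> else 0) else - P $$ (x - N, y - N))"
    if "x < N + N" "y < N + N" "P \<in> carrier_mat N N" for x y P
    using that unfolding stepP_def by (simp add: index_mat_four_block)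
  have iQ: "stepQ N Q $$ (x,y) = (if x < N then if y < N then Q $$ (x,y) else 0
     else if y < N then 0 else Q $$ (x - N, y - N))"
    if "x < N + N" "y < N + N" "Q \<in> carrier_mat N N" for x y Q
    using that unfolding stepQ_def by (simp add: index_mat_four_block)
  have cP: "stepP N P \<in> carrier_mat (N+N) (N+N)" if "P \<in> carrier_mat N N" for P
    using that unfolding stepP_def by auto
  have cQ: "stepQ N P \<in> carrier_mat (N+N) (N+N)" if "P \<in> carrier_mat N N" for P
    using that unfolding stepQ_def by auto
  have AB00: "(A + B) $$ (u,v) = A $$ (u,v) + B $$ (u,v)" if "u < N" "v < N" for u v
    using that A B by simp
  show ?case
  proof (cases "even n")
    case True
    have f: "fst (AB (Suc n)) = stepP N A" "snd (AB (Suc n)) = stepQ N B"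
      using True by (auto simp: A_def B_def N_def)
    have s: "(stepP N A + stepQ N B) $$ (u,v) = stepP N A $$ (u,v) + stepQ N B $$ (u,v)"
      if "u < N + N" "v < N + N" for u v
      using that cQ[OF B] by simp
    have "conn (N+N) (stepP N A + stepQ N B)"
    proof (rule conn_step[OF c])
      show "\<forall>u<N. \<forall>v<N. (stepP N A + stepQ N B) $$ (u, v) = (A + B) $$ (u, v)"
      proof (intro allI impI)
        fix u v assume uv: "u < N" "v < N"
        then have uv2: "u < N + N" "v < N + N" by auto
        show "(stepP N A + stepQ N B) $$ (u, v) = (A + B) $$ (u, v)"
          unfolding s[OF uv2] iP[OF uv2 A] iQ[OF uv2 B] AB00[OF uv] using uv by simp
      qed
      show "\<forall>u<N. (stepP N A + stepQ N B) $$ (u, u + N) \<noteq> 0"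
      proof (intro allI impI)
        fix u assume uv: "u < N"
        then have uv2: "u < N + N" "u + N < N + N" by auto
        show "(stepP N A + stepQ N B) $$ (u, u + N) \<noteq> 0"
          unfolding s[OF uv2] iP[OF uv2 A] iQ[OF uv2 B] using uv by simp
      qed
    qed
    then show ?thesis unfolding f N2
      using good_stepP[OF A N_def gA] good_stepQ[OF B N_def gB] disj_step[OF A B d] by simp
  next
    case False
    have f: "fst (AB (Suc n)) = stepQ N A" "snd (AB (Suc n)) = stepP N B"
      using False by (auto simp: A_def B_def N_def)
    have s: "(stepQ N A + stepP N B) $$ (u,v) = stepQ N A $$ (u,v) + stepP N B $$ (u,v)"
      if "u < N + N" "v < N + N" for u v
      using that cP[OF B] by simp
    have "conn (N+N) (stepQ N A + stepP N B)"
    proof (rule conn_step[OF c])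
      show "\<forall>u<N. \<forall>v<N. (stepQ N A + stepP N B) $$ (u, v) = (A + B) $$ (u, v)"
      proof (intro allI impI)
        fix u v assume uv: "u < N" "v < N"
        then have uv2: "u < N + N" "v < N + N" by auto
        show "(stepQ N A + stepP N B) $$ (u, v) = (A + B) $$ (u, v)"
          unfolding s[OF uv2] iP[OF uv2 B] iQ[OF uv2 A] AB00[OF uv] using uv by simp
      qed
      show "\<forall>u<N. (stepQ N A + stepP N B) $$ (u, u + N) \<noteq> 0"
      proof (intro allI impI)
        fix u assume uv: "u < N"
        then have uv2: "u < N + N" "u + N < N + N" by auto
        show "(stepQ N A + stepP N B) $$ (u, u + N) \<noteq> 0"
          unfolding s[OF uv2] iP[OF uv2 B] iQ[OF uv2 A] using uv by simp
      qed
    qed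
    then show ?thesis unfolding f N2
      using good_stepQ[OF A N_def gA] good_stepP[OF B N_def gB] disj_sym[OF disj_step[OF B A disj_sym[OF d]]] by simp
  qed
qed

lemma cube:
  fixes A B :: "complex mat"
  assumes A: "A \<in> carrier_mat N N" and B: "B \<in> carrier_mat N N"
    and AA: "A * A = c \<cdot>\<^sub>m 1\<^sub>m N" and BB: "B * B = c \<cdot>\<^sub>m 1\<^sub>m N" and AB: "A * B = B * A"
  shows "(A + B) * (A + B) = (2 * c) \<cdot>\<^sub>m 1\<^sub>m N + 2 \<cdot>\<^sub>m (A * B)"
    "(A + B) * ((A + B) * (A + B)) = (4 * c) \<cdot>\<^sub>m (A + B)"
proof -
  have D: "A * B \<in> carrier_mat N N" using A B by auto
  have HH: "(A + B) * (A + B) = A * A + B * A + (A * B + B * B)"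
    using A B by (simp add: add_mult_distrib_mat[of _ N N] mult_add_distrib_mat[of _ N N])
  show H2: "(A + B) * (A + B) = (2 * c) \<cdot>\<^sub>m 1\<^sub>m N + 2 \<cdot>\<^sub>m (A * B)"
    unfolding HH AA BB AB[symmetric] by (rule eq_matI) (use A B D in \<open>auto simp: algebra_simps\<close>)
  have AD: "A * (A * B) = c \<cdot>\<^sub>m B"
  proof -
    have "A * (A * B) = (A * A) * B" using A B by (simp add: assoc_mult_mat[of _ N N _ N _ N])
    also have "\<dots> = c \<cdot>\<^sub>m B" unfolding AA using B by (simp add: sm3)
    finally show ?thesis .
  qed
  have BD: "B * (A * B) = c \<cdot>\<^sub>m A"
  proof -
    have "B * (A * B) = (B * A) * B" using A B by (simp add: assoc_mult_mat[of _ N N _ N _ N])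
    also have "\<dots> = A * (B * B)" unfolding AB[symmetric] using A B by (simp add: assoc_mult_mat[of _ N N _ N _ N])
    also have "\<dots> = c \<cdot>\<^sub>m A" unfolding BB using A by (simp add: sm2)
    finally show ?thesis .
  qed
  have "(A + B) * ((2 * c) \<cdot>\<^sub>m 1\<^sub>m N + 2 \<cdot>\<^sub>m (A * B)) = (A + B) * ((2 * c) \<cdot>\<^sub>m 1\<^sub>m N) + (A + B) * (2 \<cdot>\<^sub>m (A * B))"
    by (rule mult_add_distrib_mat[of "A + B" N N]) (use A B D in auto)
  also have "\<dots> = (2 * c) \<cdot>\<^sub>m (A + B) + 2 \<cdot>\<^sub>m (A * (A * B) + B * (A * B))"
    using A B D by (simp add: sm2 mult_smult_distrib[of _ N N _ N] add_mult_distrib_mat[of A N N B "A * B" N])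
  also have "\<dots> = (4 * c) \<cdot>\<^sub>m (A + B)"
    unfolding AD BD by (rule eq_matI) (use A B in \<open>auto simp: algebra_simps\<close>)
  finally show "(A + B) * ((A + B) * (A + B)) = (4 * c) \<cdot>\<^sub>m (A + B)" unfolding H2 .
qed

lemma smult_mat_vec: "A \<in> carrier_mat N N \<Longrightarrow> v \<in> carrier_vec N \<Longrightarrow> ((a::complex) \<cdot>\<^sub>m A) *\<^sub>v v = a \<cdot>\<^sub>v (A *\<^sub>v v)"
  by (intro eq_vecI) auto

lemma eig_set:
  fixes H :: "complex mat"
  assumes H: "H \<in> carrier_mat N N" and N: "0 < N"
    and H3: "H * (H * H) = (4 * c) \<cdot>\<^sub>m H" and H2: "(H * H) $$ (0,0) = 2 * c"
    and H00: "H $$ (0,0) = 0" and c: "c = of_real r" and r: "r > 0"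
  shows "{ev. eigenvalue H ev} = {0, 2 * of_real (sqrt r), - 2 * of_real (sqrt r)}"
proof -
  define s :: complex where "s = of_real (sqrt r)"
  have s2: "(2 * s)^2 = 4 * c" unfolding s_def c using r
    by (simp add: power_mult_distrib flip: of_real_power)
  have HH: "H * H \<in> carrier_mat N N" using H by auto
  have sub: "k \<in> {0, 2 * s, - 2 * s}" if evk: "eigenvalue H k" for k
  proof -
    obtain v where v: "v \<in> carrier_vec N" "v \<noteq> 0\<^sub>v N" "H *\<^sub>v v = k \<cdot>\<^sub>v v"
      using evk H unfolding eigenvalue_def eigenvector_def by auto
    have kv: "k \<cdot>\<^sub>v v \<in> carrier_vec N" using v by auto
    have "(H * (H * H)) *\<^sub>v v = H *\<^sub>v ((H * H) *\<^sub>v v)"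
      using H v HH by (intro assoc_mult_mat_vec) auto
    also have "\<dots> = H *\<^sub>v (H *\<^sub>v (H *\<^sub>v v))"
      using H v by (subst assoc_mult_mat_vec[of _ N N]) auto
    also have "\<dots> = (k * (k * k)) \<cdot>\<^sub>v v"
      using v(3) mult_mat_vec[OF H v(1)] mult_mat_vec[OF H kv] by (simp add: smult_smult_assoc)
    finally have e1: "(H * (H * H)) *\<^sub>v v = (k * (k * k)) \<cdot>\<^sub>v v" .
    have e2: "(H * (H * H)) *\<^sub>v v = (4 * c * k) \<cdot>\<^sub>v v"
      unfolding H3 smult_mat_vec[OF H v(1)] v(3) by (simp add: smult_smult_assoc)
    obtain i where i: "i < N" "v $ i \<noteq> 0"
    proof -
      have "\<exists>i<N. v $ i \<noteq> 0"
      proof (rule ccontr)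
        assume "\<not> (\<exists>i<N. v $ i \<noteq> 0)"
        then have "v = 0\<^sub>v N" using v(1) by (intro eq_vecI) auto
        then show False using v(2) by simp
      qed
      then show ?thesis using that by blast
    qed
    have "(k * (k * k)) * v $ i = (4 * c * k) * v $ i"
      using arg_cong[OF trans[OF e1[symmetric] e2], of "\<lambda>w. w $ i"] i v(1) by simp
    then have "k * (k * k) = 4 * c * k" using i by simp
    then have "k = 0 \<or> k * k = (2 * s) * (2 * s)" using s2 by (auto simp: power2_eq_square)
    then have "k = 0 \<or> k = 2 * s \<or> k = - (2 * s)" using square_eq_iff[of k "2 * s"] by blast
    then show ?thesis by auto
  qed
  have sup: "eigenvalue H k" if k: "k \<in> {0, 2 * s, - 2 * s}" for k
  proof -
    have kk: "k * (k * k) = 4 * c * k" using k s2 by (auto simp: power2_eq_square)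
    define M where "M = H * H + k \<cdot>\<^sub>m H + (k * k - 4 * c) \<cdot>\<^sub>m 1\<^sub>m N"
    have Mc: "M \<in> carrier_mat N N" unfolding M_def using H by auto
    have "H * M = H * (H * H) + H * (k \<cdot>\<^sub>m H) + H * ((k * k - 4 * c) \<cdot>\<^sub>m 1\<^sub>m N)"
      unfolding M_def using H HH
      by (simp add: mult_add_distrib_mat[of H N N _ N])
    also have "\<dots> = k \<cdot>\<^sub>m M"
      unfolding H3 M_def using H HH kk
      by (intro eq_matI) (auto simp: sm2 mult_smult_distrib[of _ N N _ N] algebra_simps)
    finally have HM: "H * M = k \<cdot>\<^sub>m M" .
    define v where "v = col M 0"
    have vc: "v \<in> carrier_vec N" unfolding v_def using Mc by auto
    have "H *\<^sub>v v = col (H * M) 0" unfolding v_def using H Mc N by (intro col_mult2[symmetric]) auto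
    also have "\<dots> = k \<cdot>\<^sub>v v" unfolding HM v_def using Mc N by simp
    finally have ev: "H *\<^sub>v v = k \<cdot>\<^sub>v v" .
    have v0: "v $ 0 = k * k - 2 * c"
      unfolding v_def M_def using H N H2 H00 HH by simp
    have "k * k - 2 * c \<noteq> 0" using k s2 r c by (auto simp: power2_eq_square)
    then have "v \<noteq> 0\<^sub>v N" using v0 N by auto
    then show ?thesis unfolding eigenvalue_def eigenvector_def using vc ev H by auto
  qed
  show ?thesis using sub sup unfolding s_def by blast
qed

lemma good_add:
  assumes A: "A \<in> carrier_mat N N" and B: "B \<in> carrier_mat N N"
    and gA: "good N A" and gB: "good N B" and d: "disj N A B"
  shows "good N (A + B)"
  unfolding good_def
proof (intro allI impI)
  fix u v assume u: "u < N" and v: "v < N"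
  have e: "(A + B) $$ (u,v) = A $$ (u,v) + B $$ (u,v)" "(A + B) $$ (v,u) = A $$ (v,u) + B $$ (v,u)"
    using u v A B by auto
  have a: "(A $$ (u,v) = 0 \<or> A $$ (u,v) = \<i> \<or> A $$ (u,v) = - \<i>) \<and> A $$ (v,u) = cnj (A $$ (u,v))
     \<and> (A $$ (u,v) \<noteq> 0 \<longrightarrow> pc u = Suc (pc v) \<or> pc v = Suc (pc u))"
    using gA u v unfolding good_def by blast
  have b: "(B $$ (u,v) = 0 \<or> B $$ (u,v) = \<i> \<or> B $$ (u,v) = - \<i>) \<and> B $$ (v,u) = cnj (B $$ (u,v))
     \<and> (B $$ (u,v) \<noteq> 0 \<longrightarrow> pc u = Suc (pc v) \<or> pc v = Suc (pc u))"
    using gB u v unfolding good_def by blast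
  have dd: "A $$ (u,v) = 0 \<or> B $$ (u,v) = 0" using d u v unfolding disj_def by blast
  show "((A + B) $$ (u,v) = 0 \<or> (A + B) $$ (u,v) = \<i> \<or> (A + B) $$ (u,v) = - \<i>)
     \<and> (A + B) $$ (v,u) = cnj ((A + B) $$ (u,v))
     \<and> ((A + B) $$ (u,v) \<noteq> 0 \<longrightarrow> pc u = Suc (pc v) \<or> pc v = Suc (pc u))"
  proof (cases "A $$ (u,v) = 0")
    case True
    then have "A $$ (v,u) = 0" using a by simp
    then show ?thesis unfolding e using True b by simp
  next
    case False
    then have "B $$ (u,v) = 0" using dd by simp
    moreover then have "B $$ (v,u) = 0" using b by simp
    ultimately show ?thesis unfolding e using a by simp
  qed
qed

definition arcs :: "nat \<Rightarrow> complex mat \<Rightarrow> (nat \<times> nat) set" where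
  "arcs N H = {(u,v). u < N \<and> v < N \<and> H $$ (u,v) = \<i>}"

lemma goodD:
  assumes "good N H" "u < N" "v < N"
  shows "H $$ (u,v) = 0 \<or> H $$ (u,v) = \<i> \<or> H $$ (u,v) = - \<i>" "H $$ (v,u) = cnj (H $$ (u,v))"
    "H $$ (u,v) \<noteq> 0 \<Longrightarrow> pc u = Suc (pc v) \<or> pc v = Suc (pc u)"
  using assms unfolding good_def by blast+

lemma arcs_digraph: "good N H \<Longrightarrow> is_digraph N (arcs N H)"
  unfolding is_digraph_def arcs_def
proof (intro conjI allI)
  assume g: "good N H"
  show "{(u, v). u < N \<and> v < N \<and> H $$ (u, v) = \<i>} \<subseteq> {0..<N} \<times> {0..<N}" by auto
  fix x
  show "(x, x) \<notin> {(u, v). u < N \<and> v < N \<and> H $$ (u, v) = \<i>}"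
  proof
    assume "(x, x) \<in> {(u, v). u < N \<and> v < N \<and> H $$ (u, v) = \<i>}"
    then have x: "x < N" "H $$ (x,x) = \<i>" by auto
    then have "H $$ (x,x) = cnj \<i>" using goodD(2)[OF g x(1) x(1)] by simp
    then show False using x by (simp add: complex_eq_iff)
  qed
qed

lemma arcs_herm:
  assumes H: "H \<in> carrier_mat N N" and g: "good N H"
  shows "hermitian_adj N (arcs N H) = H"
proof (rule eq_matI)
  fix u v assume "u < dim_row H" "v < dim_col H"
  then have u: "u < N" and v: "v < N" using H by auto
  have c1: "H $$ (u,v) = 0 \<or> H $$ (u,v) = \<i> \<or> H $$ (u,v) = - \<i>" and c2: "H $$ (v,u) = cnj (H $$ (u,v))"
    using goodD[OF g u v] by auto
  have ne: "\<i> \<noteq> - \<i>" "(0::complex) \<noteq> \<i>" "- \<i> \<noteq> 0" by (auto simp: complex_eq_iff)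
  have m: "hermitian_adj N (arcs N H) $$ (u, v) = (if (u, v) \<in> arcs N H \<and> (v, u) \<in> arcs N H then 1
     else if (u, v) \<in> arcs N H then \<i> else if (v, u) \<in> arcs N H then - \<i> else 0)"
    unfolding hermitian_adj_def using u v by simp
  have a1: "(u,v) \<in> arcs N H \<longleftrightarrow> H $$ (u,v) = \<i>" "(v,u) \<in> arcs N H \<longleftrightarrow> H $$ (v,u) = \<i>"
    unfolding arcs_def using u v by auto
  show "hermitian_adj N (arcs N H) $$ (u, v) = H $$ (u, v)"
    unfolding m a1 c2 using c1 ne by (elim disjE) (simp_all add: ne[symmetric])
qed (use H in \<open>auto simp: hermitian_adj_def\<close>)

lemma arcs_und:
  assumes g: "good N H"
  shows "underlying_edges (arcs N H) = E N H"
proof -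
  have "(u,v) \<in> underlying_edges (arcs N H) \<longleftrightarrow> (u,v) \<in> E N H" for u v
  proof (cases "u < N \<and> v < N")
    case True
    then have c1: "H $$ (u,v) = 0 \<or> H $$ (u,v) = \<i> \<or> H $$ (u,v) = - \<i>" and c2: "H $$ (v,u) = cnj (H $$ (u,v))"
      using goodD(1,2)[OF g] True by blast+
    have ne: "\<i> \<noteq> - \<i>" "(0::complex) \<noteq> \<i>" "- \<i> \<noteq> 0" by (auto simp: complex_eq_iff)
    have a1: "(u,v) \<in> arcs N H \<longleftrightarrow> H $$ (u,v) = \<i>" "(v,u) \<in> arcs N H \<longleftrightarrow> H $$ (v,u) = \<i>"
      unfolding arcs_def using True by auto
    have "(u,v) \<in> underlying_edges (arcs N H) \<longleftrightarrow> H $$ (u,v) = \<i> \<or> H $$ (v,u) = \<i>"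
      unfolding underlying_edges_def using a1 by auto
    also have "\<dots> \<longleftrightarrow> H $$ (u,v) \<noteq> 0" unfolding c2 using c1 ne by (elim disjE) (simp_all add: ne[symmetric])
    finally show ?thesis unfolding E_def using True by simp
  next
    case False
    then show ?thesis unfolding underlying_edges_def arcs_def E_def by auto
  qed
  then show ?thesis by (simp add: set_eq_iff split_paired_all)
qed

lemma E_sym: assumes g: "good N H" and xy: "(x,y) \<in> E N H" shows "(y,x) \<in> E N H"
proof -
  have x: "x < N" "y < N" "H $$ (x,y) \<noteq> 0" using xy unfolding E_def by auto
  have "H $$ (y,x) = cnj (H $$ (x,y))" using goodD(2)[OF g x(1,2)] .
  then show ?thesis using x unfolding E_def by simp
qed

lemma path_bound: "good N H \<Longrightarrow> (x,y) \<in> (E N H) ^^ k \<Longrightarrow> pc y \<le> pc x + k"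
proof (induction k arbitrary: y)
  case 0
  then show ?case by simp
next
  case (Suc k)
  then obtain z where z: "(x,z) \<in> (E N H) ^^ k" "(z,y) \<in> E N H" by auto
  have "pc y \<le> pc z + 1" using z(2) goodD(3)[OF Suc.prems(1)] unfolding E_def by fastforce
  then show ?case using Suc.IH[OF Suc.prems(1) z(1)] by simp
qed

lemma conn_und:
  assumes g: "good N H" and c: "conn N H"
  shows "und_connected N (arcs N H)"
  unfolding und_connected_def arcs_und[OF g]
proof (intro allI impI)
  fix x y assume x: "x < N" and y: "y < N"
  have sy: "(E N H)\<inverse> = E N H" using E_sym[OF g] by auto
  have "(0,x) \<in> (E N H)\<^sup>*" "(0,y) \<in> (E N H)\<^sup>*" using c x y unfolding conn_def by auto
  then have "(x,0) \<in> (E N H)\<^sup>*" "(0,y) \<in> (E N H)\<^sup>*"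
    using rtrancl_converseI[of 0 x "E N H"] sy by auto
  then have "(x,y) \<in> (E N H)\<^sup>*" by auto
  then show "\<exists>k. (x, y) \<in> E N H ^^ k" by (simp add: rtrancl_power)
qed

lemma diam_bound:
  assumes g: "good N H" and c: "conn N H" and N: "N = 2^n"
  shows "n \<le> und_diameter N (arcs N H)"
proof -
  have cc: "und_connected N (arcs N H)" using conn_und[OF g c] .
  have t: "N - 1 < N" "0 < N" using N by auto
  obtain k where k: "(0, N - 1) \<in> E N H ^^ k"
    using cc t unfolding und_connected_def arcs_und[OF g] by blast
  have "(0, N - 1) \<in> E N H ^^ (und_dist (arcs N H) 0 (N - 1))"
    unfolding und_dist_def arcs_und[OF g] by (rule LeastI[of _ k]) (rule k)
  from path_bound[OF g this] have "n \<le> und_dist (arcs N H) 0 (N - 1)"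
    using pc_top[of n] N by (simp add: pc.simps)
  also have "\<dots> \<le> und_diameter N (arcs N H)"
    unfolding und_diameter_def
  proof (rule Max_ge)
    have "{und_dist (arcs N H) x y |x y. x < N \<and> y < N} \<subseteq> (\<lambda>(x,y). und_dist (arcs N H) x y) ` ({..<N} \<times> {..<N})"
      by auto
    then show "finite {und_dist (arcs N H) x y |x y. x < N \<and> y < N}"
      using finite_subset by blast
    show "und_dist (arcs N H) 0 (N - 1) \<in> {und_dist (arcs N H) x y |x y. x < N \<and> y < N}"
      using t by blast
  qed
  finally show ?thesis .
qed

lemma family:
  fixes j :: nat
  defines "n \<equiv> 2 * j + 2"
  defines "N \<equiv> (2::nat) ^ n"
  defines "H \<equiv> fst (AB n) + snd (AB n)"
  shows "is_digraph N (arcs N H) \<and> und_connected N (arcs N H)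
     \<and> card {ev. eigenvalue (hermitian_adj N (arcs N H)) ev} = 3
     \<and> n \<le> und_diameter N (arcs N H)"
proof -
  define A where "A = fst (AB n)"
  define B where "B = snd (AB n)"
  have alg: "A \<in> carrier_mat N N" "B \<in> carrier_mat N N"
    "A * A = of_nat ((n+1) div 2) \<cdot>\<^sub>m 1\<^sub>m N" "B * B = of_nat (n div 2) \<cdot>\<^sub>m 1\<^sub>m N"
    "A * B = B * A" "\<forall>u<N. (A * B) $$ (u,u) = 0"
    using AB_alg[of n] unfolding A_def B_def N_def by auto
  have d1: "(n+1) div 2 = j + 1" "n div 2 = j + 1" unfolding n_def by auto
  have inv: "good N A" "good N B" "disj N A B" "conn N H"
    using AB_inv[of n] unfolding A_def B_def N_def H_def by auto
  have HAB: "H = A + B" unfolding H_def A_def B_def by simp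
  have Hc: "H \<in> carrier_mat N N" unfolding HAB using alg by auto
  have g: "good N H" unfolding HAB by (rule good_add) (use alg inv in auto)
  have N0: "0 < N" unfolding N_def by simp
  define c :: complex where "c = of_nat (j + 1)"
  note cb = cube[OF alg(1,2), of c]
  have AA: "A * A = c \<cdot>\<^sub>m 1\<^sub>m N" "B * B = c \<cdot>\<^sub>m 1\<^sub>m N" using alg(3,4) d1 unfolding c_def by auto
  have H3: "H * (H * H) = (4 * c) \<cdot>\<^sub>m H" unfolding HAB using cb(2)[OF AA alg(5)] .
  have ABc: "A * B \<in> carrier_mat N N" using alg by auto
  have H2: "(H * H) $$ (0,0) = 2 * c" 
  proof -
    have z: "(A * B) $$ (0,0) = 0" using alg(6) N0 by blast
    have "(2 * c \<cdot>\<^sub>m 1\<^sub>m N + 2 \<cdot>\<^sub>m (A * B)) $$ (0,0) = 2 * c * 1 + 2 * (A * B) $$ (0,0)"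
      using N0 ABc by (simp del: index_mult_mat)
    then show ?thesis unfolding HAB cb(1)[OF AA alg(5)] z by simp
  qed
  have H00: "H $$ (0,0) = 0"
  proof -
    have "H $$ (0,0) = 0 \<or> H $$ (0,0) = \<i> \<or> H $$ (0,0) = - \<i>" "H $$ (0,0) = cnj (H $$ (0,0))"
      using goodD[OF g N0 N0] by auto
    then show ?thesis by (auto simp: complex_eq_iff)
  qed
  have cr: "c = of_real (real (j + 1))" unfolding c_def by simp
  have es: "{ev. eigenvalue H ev} = {0, 2 * of_real (sqrt (real (j+1))), - 2 * of_real (sqrt (real (j+1)))}"
    by (rule eig_set[OF Hc N0 H3 H2 H00 cr]) simp
  have sne: "(of_real (sqrt (real (j+1))) :: complex) \<noteq> 0" by simp
  have card3: "card {ev. eigenvalue H ev} = 3"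
    unfolding es using sne by (simp add: complex_eq_iff)
  have h: "hermitian_adj N (arcs N H) = H" by (rule arcs_herm[OF Hc g])
  show ?thesis unfolding h
    using arcs_digraph[OF g] conn_und[OF g inv(4)] card3 diam_bound[OF g inv(4) N_def[THEN meta_eq_to_obj_eq]] by blast
qed

theorem corollary7p3:
  shows "\<exists>X :: nat \<Rightarrow> nat \<times> (nat \<times> nat) set.
     (\<forall>j. is_digraph (fst (X j)) (snd (X j))
          \<and> und_connected (fst (X j)) (snd (X j))
          \<and> card {ev. eigenvalue (hermitian_adj (fst (X j)) (snd (X j))) ev} = 3)
     \<and> filterlim (\<lambda>j. und_diameter (fst (X j)) (snd (X j))) at_top sequentially"
proof -
  define X where "X = (\<lambda>j::nat. ((2::nat) ^ (2 * j + 2),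
     arcs (2 ^ (2 * j + 2)) (fst (AB (2 * j + 2)) + snd (AB (2 * j + 2)))))"
  have f: "fst (X j) = 2 ^ (2 * j + 2)" "snd (X j) = arcs (2 ^ (2 * j + 2)) (fst (AB (2 * j + 2)) + snd (AB (2 * j + 2)))" for j
    unfolding X_def by simp_all
  have P: "\<forall>j. is_digraph (fst (X j)) (snd (X j))
          \<and> und_connected (fst (X j)) (snd (X j))
          \<and> card {ev. eigenvalue (hermitian_adj (fst (X j)) (snd (X j))) ev} = 3"
    unfolding f using family by blast
  have D: "j \<le> und_diameter (fst (X j)) (snd (X j))" for j
  proof -
    have "2 * j + 2 \<le> und_diameter (fst (X j)) (snd (X j))" unfolding f using family[of j] by blast
    then show ?thesis by linarith
  qed
  have L: "filterlim (\<lambda>j. und_diameter (fst (X j)) (snd (X j))) at_top sequentially"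
    unfolding filterlim_at_top eventually_sequentially using D le_trans by blast
  show ?thesis using P L by blast
qed

end
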